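(* Suppose $f$ is $L_f$-smooth and $\mu_f$-strongly convex. Let $x^\star$ be a minimizer of $f$ and $x^\star_{\mathcal D}$ a minimizer of $\tilde f$. Then $$f(x^\star)\le f(x^\star_{\mathcal D})\le f(x^\star)+\frac{(L_{\mathcal D}-1)L_f}{2}\|x^\star-s\|^2-\frac{(\mu_{\mathcal D}-1)\mu_f}{2}\|x^\star_{\mathcal D}-s\|^2.$$
   Context: Let $f:\mathbb R^d\to\mathbb R$, fix $s\in\mathbb R^d$, and let $\mathcal D$ be a distribution of random matrices $\mathbf S\in\mathbb R^{d\times d}$ with $\mathbb E[\mathbf S]=I$ and $\mathbb E[\mathbf S^\top\mathbf S]$ finite. Define $f_{\mathbf S}(x)=f(s+\mathbf S(x-s))$, $\tilde f(x)=\mathbb E_{\mathbf S\sim\mathcal D}[f_{\mathbf S}(x)]$, $L_{\mathcal D}=\lambda_{\max}(\mathbb E[\mathbf S^\top\mathbf S])$, $\mu_{\mathcal D}=\lambda_{\min}(\mathbb E[\mathbf S^\top\mathbf S])$. $f$ is $L_f$-smooth if differentiable, bounded below, and $f(x+h)\le f(x)+\langle\nabla f(x),h\rangle+\frac{L_f}{2}\|h\|^2$ for all $x,h$; $\mu_f$-strongly convex if $f(x+h)\ge f(x)+\langle\nabla f(x),h\rangle+\frac{\mu_f}{2}\|h\|^2$ for all $x,h$. *)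

theory Defs
  imports "HOL-Analysis.Analysis" "HOL-Probability.Probability"
begin

definition L_smooth :: "real \<Rightarrow> (real^'n \<Rightarrow> real) \<Rightarrow> bool" where
  "L_smooth L f \<longleftrightarrow> bdd_below (range f) \<and>
     (\<forall>x. \<exists>g. (GDERIV f x :> g) \<and>
        (\<forall>h. f (x + h) \<le> f x + g \<bullet> h + L / 2 * (norm h)\<^sup>2))"

definition strongly_convex :: "real \<Rightarrow> (real^'n \<Rightarrow> real) \<Rightarrow> bool" where
  "strongly_convex \<mu> f \<longleftrightarrow>
     (\<forall>x. \<exists>g. (GDERIV f x :> g) \<and>
        (\<forall>h. f (x + h) \<ge> f x + g \<bullet> h + \<mu> / 2 * (norm h)\<^sup>2))"

definition eigenvalues :: "real^'n^'n \<Rightarrow> real set" where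
  "eigenvalues A = {c. \<exists>v. v \<noteq> 0 \<and> A *v v = c *\<^sub>R v}"

definition lambda_max :: "real^'n^'n \<Rightarrow> real" where
  "lambda_max A = Max (eigenvalues A)"

definition lambda_min :: "real^'n^'n \<Rightarrow> real" where
  "lambda_min A = Min (eigenvalues A)"

definition sketch :: "(real^'n \<Rightarrow> real) \<Rightarrow> real^'n \<Rightarrow> real^'n^'n \<Rightarrow> real^'n \<Rightarrow> real" where
  "sketch f s S x = f (s + S *v (x - s))"

definition f_tilde :: "(real^'n^'n) measure \<Rightarrow> (real^'n \<Rightarrow> real) \<Rightarrow> real^'n \<Rightarrow> real^'n \<Rightarrow> real" where
  "f_tilde D f s x = (\<integral>S. sketch f s S x \<partial>D)"

end

theory Submission imports Defs begin

lemma sym_top_eig: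
  fixes F :: "real^'n \<Rightarrow> real^'n"
  assumes lin: "bounded_linear F" and sym: "\<And>u v. u \<bullet> F v = v \<bullet> F u"
  shows "\<exists>v c. v \<noteq> 0 \<and> F v = c *\<^sub>R v \<and> (\<forall>x. x \<bullet> F x \<le> c * (norm x)\<^sup>2)"
proof -
  interpret F: bounded_linear F by fact
  have ne: "sphere (0::real^'n) 1 \<noteq> {}"
    by (simp add: sphere_eq_empty)
  have cont: "continuous_on (sphere 0 1) (\<lambda>x. x \<bullet> F x)"
    by (intro continuous_intros F.continuous_on continuous_on_id)
  obtain v where v: "v \<in> sphere 0 1" and vmax: "\<And>y. y \<in> sphere 0 1 \<Longrightarrow> y \<bullet> F y \<le> v \<bullet> F v"
    using continuous_attains_sup[OF compact_sphere ne cont] by blast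
  define c where "c = v \<bullet> F v"
  have nv: "norm v = 1" using v by simp
  have bound: "x \<bullet> F x \<le> c * (norm x)\<^sup>2" for x
  proof (cases "x = 0")
    case True then show ?thesis by (simp add: F.zero)
  next
    case False
    define y where "y = x /\<^sub>R norm x"
    have "y \<in> sphere 0 1" using False by (simp add: y_def)
    hence "y \<bullet> F y \<le> c" using vmax c_def by simp
    moreover have "y \<bullet> F y = (x \<bullet> F x) / (norm x)\<^sup>2"
      by (simp add: y_def F.scaleR power2_eq_square field_simps)
    ultimately show ?thesis using False
      by (simp add: divide_le_eq mult.commute)
  qed
  have orth: "w \<bullet> (F v - c *\<^sub>R v) = 0" for w
  proof -
    define a where "a = w \<bullet> F v - c * (v \<bullet> w)"
    define b where "b = w \<bullet> F w - c * (norm w)\<^sup>2"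
    have b: "b \<le> 0" using bound[of w] by (simp add: b_def)
    have key: "2 * t * a + t\<^sup>2 * b \<le> 0" for t
    proof -
      have "(v + t *\<^sub>R w) \<bullet> F (v + t *\<^sub>R w) \<le> c * (norm (v + t *\<^sub>R w))\<^sup>2" by (rule bound)
      moreover have "(v + t *\<^sub>R w) \<bullet> F (v + t *\<^sub>R w) = c + 2 * t * (w \<bullet> F v) + t\<^sup>2 * (w \<bullet> F w)"
        using sym[of v w] by (simp add: F.add F.scaleR inner_add_left inner_add_right c_def power2_eq_square algebra_simps)
      moreover have "(norm (v + t *\<^sub>R w))\<^sup>2 = 1 + 2 * t * (v \<bullet> w) + t\<^sup>2 * (norm w)\<^sup>2"
      proof -
        have "(norm (v + t *\<^sub>R w))\<^sup>2 = (v + t *\<^sub>R w) \<bullet> (v + t *\<^sub>R w)" by (rule power2_norm_eq_inner)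
        also have "\<dots> = v \<bullet> v + 2 * t * (v \<bullet> w) + t\<^sup>2 * (w \<bullet> w)"
          by (simp add: inner_add_left inner_add_right power2_eq_square algebra_simps inner_commute)
        finally show ?thesis using nv by (simp add: power2_norm_eq_inner[symmetric])
      qed
      ultimately show ?thesis by (simp add: a_def b_def algebra_simps power2_eq_square)
    qed
    have "a = 0"
    proof (rule ccontr)
      assume an: "a \<noteq> 0"
      define d where "d = \<bar>b\<bar> + 1"
      define t where "t = a / d"
      have pos: "d > 0" by (simp add: d_def)
      have "2 * t * a + t\<^sup>2 * b = a\<^sup>2 * (2 * d + b) / d\<^sup>2"
        using pos by (simp add: t_def field_simps power2_eq_square)
      moreover have "a\<^sup>2 * (2 * d + b) / d\<^sup>2 > 0"
        using an pos by (intro divide_pos_pos mult_pos_pos) (auto simp: abs_if d_def)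
      ultimately show False using key[of t] by simp
    qed
    thus ?thesis by (simp add: a_def inner_diff_right inner_commute)
  qed
  have "F v = c *\<^sub>R v" using orth[of "F v - c *\<^sub>R v"] by simp
  moreover have "v \<noteq> 0" using nv by auto
  ultimately show ?thesis using bound by blast
qed

lemma sym_eig_finite:
  fixes M :: "real^'n^'n"
  assumes sym: "\<And>u v. u \<bullet> (M *v v) = v \<bullet> (M *v u)"
  shows "finite (eigenvalues M)"
proof (rule ccontr)
  assume inf: "infinite (eigenvalues M)"
  obtain T where T: "T \<subseteq> eigenvalues M" "finite T" "card T = DIM(real^'n) + 1"
    using infinite_arbitrarily_large[OF inf] by blast
  define ev where "ev c = (SOME v. v \<noteq> 0 \<and> M *v v = c *\<^sub>R v)" for c
  have ev: "ev c \<noteq> 0 \<and> M *v ev c = c *\<^sub>R ev c" if "c \<in> eigenvalues M" for c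
    using that unfolding eigenvalues_def ev_def by (metis (mono_tags, lifting) mem_Collect_eq someI_ex)
  have ortho: "ev a \<bullet> ev b = 0" if "a \<in> T" "b \<in> T" "a \<noteq> b" for a b
  proof -
    have "ev a \<bullet> (M *v ev b) = ev b \<bullet> (M *v ev a)" by (rule sym)
    moreover have "ev a \<bullet> (M *v ev b) = b * (ev a \<bullet> ev b)" using ev[of b] that T(1) by auto
    moreover have "ev b \<bullet> (M *v ev a) = a * (ev a \<bullet> ev b)" using ev[of a] that T(1) by (auto simp: inner_commute)
    ultimately have "(b - a) * (ev a \<bullet> ev b) = 0" by (simp add: algebra_simps)
    thus ?thesis using that by simp
  qed
  have inj: "inj_on ev T"
  proof (rule inj_onI)
    fix a b assume ab: "a \<in> T" "b \<in> T" "ev a = ev b"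
    show "a = b"
    proof (rule ccontr)
      assume "a \<noteq> b"
      hence "ev a \<bullet> ev a = 0" using ortho[OF ab(1,2)] ab(3) by simp
      thus False using ev[of a] ab T(1) by auto
    qed
  qed
  have "independent (ev ` T)"
    apply (rule pairwise_orthogonal_independent)
    using ortho ev T(1) unfolding pairwise_def orthogonal_def by auto
  hence "card (ev ` T) \<le> DIM(real^'n)" using independent_bound by blast
  thus False using card_image[OF inj] T(3) by simp
qed

lemma bl_mv: "bounded_linear (\<lambda>A::real^'n^'m. A *v v)"
proof -
  have "linear (\<lambda>A::real^'n^'m. A *v v)"
    by (rule linearI) (auto simp: matrix_vector_mult_def vec_eq_iff sum.distrib sum_distrib_left algebra_simps)
  thus ?thesis by (simp add: linear_conv_bounded_linear)
qed

lemma bl_uv: "bounded_linear (\<lambda>A::real^'n^'m. u \<bullet> (A *v v))"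
  by (rule bounded_linear_compose[OF bounded_linear_inner_right bl_mv])

lemma quad_id: "u \<bullet> ((transpose S ** S) *v v) = (S *v u) \<bullet> (S *v (v::real^'n))"
proof -
  have "(transpose S ** S) *v v = (S *v v) v* S"
    by (simp add: matrix_vector_mul_assoc[symmetric])
  thus ?thesis by (metis inner_commute dot_lmul_matrix)
qed

lemma expect_lemma:
  fixes D :: "(real^'n^'n) measure" and g h :: "real^'n" and c K :: real
  assumes P: "prob_space D"
    and ES_int: "integrable D (\<lambda>S. S)"
    and ES: "(\<integral>S. S \<partial>D) = mat 1"
    and ESS_int: "integrable D (\<lambda>S. transpose S ** S)"
  defines "F \<equiv> \<lambda>S. c + g \<bullet> (S *v h) - g \<bullet> h + K/2 * (h \<bullet> ((transpose S ** S) *v h) - 2 * (h \<bullet> (S *v h)) + h \<bullet> h)"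
  shows "integrable D F \<and> integral\<^sup>L D F = c + K/2 * (h \<bullet> ((\<integral>S. transpose S ** S \<partial>D) *v h) - h \<bullet> h)"
proof -
  interpret prob_space D by fact
  have i1: "integrable D (\<lambda>S. g \<bullet> (S *v h))" by (rule integrable_bounded_linear[OF bl_uv ES_int])
  have e1: "(\<integral>S. g \<bullet> (S *v h) \<partial>D) = g \<bullet> h"
    using integral_bounded_linear[OF bl_uv ES_int, of g h] ES by simp
  have i2: "integrable D (\<lambda>S. h \<bullet> (S *v h))" by (rule integrable_bounded_linear[OF bl_uv ES_int])
  have e2: "(\<integral>S. h \<bullet> (S *v h) \<partial>D) = h \<bullet> h"
    using integral_bounded_linear[OF bl_uv ES_int, of h h] ES by simp
  have i3: "integrable D (\<lambda>S. h \<bullet> ((transpose S ** S) *v h))"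
    by (rule integrable_bounded_linear[OF bl_uv ESS_int, of h h])
  have e3: "(\<integral>S. h \<bullet> ((transpose S ** S) *v h) \<partial>D) = h \<bullet> ((\<integral>S. transpose S ** S \<partial>D) *v h)"
    by (rule integral_bounded_linear[OF bl_uv ESS_int])
  have ic: "integrable D (\<lambda>S. a)" for a :: real by (rule integrable_const)
  have ec: "(\<integral>S. a \<partial>D) = a" for a :: real by (simp add: prob_space)
  have iF: "integrable D F" unfolding F_def
    by (intro Bochner_Integration.integrable_add Bochner_Integration.integrable_diff
        Bochner_Integration.integrable_mult_right i1 i2 i3 ic)
  have "integral\<^sup>L D F = c + (g \<bullet> h) - g \<bullet> h + K/2 * (h \<bullet> ((\<integral>S. transpose S ** S \<partial>D) *v h) - 2 * (h \<bullet> h) + h \<bullet> h)"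
    unfolding F_def
    apply (subst Bochner_Integration.integral_add, (intro Bochner_Integration.integrable_add Bochner_Integration.integrable_diff
        Bochner_Integration.integrable_mult_right i1 i2 i3 ic)+)
    apply (subst Bochner_Integration.integral_diff, (intro Bochner_Integration.integrable_add Bochner_Integration.integrable_diff
        Bochner_Integration.integrable_mult_right i1 i2 i3 ic)+)
    apply (subst Bochner_Integration.integral_add, (intro Bochner_Integration.integrable_add Bochner_Integration.integrable_diff
        Bochner_Integration.integrable_mult_right i1 i2 i3 ic)+)
    apply (subst Bochner_Integration.integral_mult_right, (intro Bochner_Integration.integrable_add Bochner_Integration.integrable_diff
        Bochner_Integration.integrable_mult_right i1 i2 i3 ic)+)
    apply (subst Bochner_Integration.integral_add, (intro Bochner_Integration.integrable_add Bochner_Integration.integrable_diff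
        Bochner_Integration.integrable_mult_right i1 i2 i3 ic)+)
    apply (subst Bochner_Integration.integral_diff, (intro Bochner_Integration.integrable_add Bochner_Integration.integrable_diff
        Bochner_Integration.integrable_mult_right i1 i2 i3 ic)+)
    apply (subst Bochner_Integration.integral_mult_right, (intro i2))
    apply (simp add: e1 e2 e3 ec prob_space algebra_simps)
    done
  thus ?thesis using iF by simp
qed


lemma sketch_bounds:
  fixes f :: "real^'n \<Rightarrow> real" and s x :: "real^'n"
    and D :: "(real^'n^'n) measure" and Lf \<mu>f :: real
  assumes D_prob: "prob_space D"
    and D_sets: "sets D = sets borel"
    and ES_int: "integrable D (\<lambda>S. S)"
    and ES: "(\<integral>S. S \<partial>D) = mat 1"
    and ESS_int: "integrable D (\<lambda>S. transpose S ** S)"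
    and smooth: "L_smooth Lf f"
    and sconv: "strongly_convex \<mu>f f"
    and contf: "continuous_on UNIV f"
  shows "f_tilde D f s x \<le> f x + Lf/2 * ((x - s) \<bullet> ((\<integral>S. transpose S ** S \<partial>D) *v (x - s)) - (x - s) \<bullet> (x - s))
       \<and> f x + \<mu>f/2 * ((x - s) \<bullet> ((\<integral>S. transpose S ** S \<partial>D) *v (x - s)) - (x - s) \<bullet> (x - s)) \<le> f_tilde D f s x"
proof -
  interpret prob_space D by fact
  define h where "h = x - s"
  obtain g where g: "\<And>d. f (x + d) \<le> f x + g \<bullet> d + Lf / 2 * (norm d)\<^sup>2"
    using smooth unfolding L_smooth_def by blast
  obtain g2 where g2: "\<And>d. f (x + d) \<ge> f x + g2 \<bullet> d + \<mu>f / 2 * (norm d)\<^sup>2"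
    using sconv unfolding strongly_convex_def by blast
  define up where "up = (\<lambda>S::real^'n^'n. f x + g \<bullet> (S *v h) - g \<bullet> h + Lf/2 * (h \<bullet> ((transpose S ** S) *v h) - 2 * (h \<bullet> (S *v h)) + h \<bullet> h))"
  define lo where "lo = (\<lambda>S::real^'n^'n. f x + g2 \<bullet> (S *v h) - g2 \<bullet> h + \<mu>f/2 * (h \<bullet> ((transpose S ** S) *v h) - 2 * (h \<bullet> (S *v h)) + h \<bullet> h))"
  have U: "integrable D up \<and> integral\<^sup>L D up = f x + Lf/2 * (h \<bullet> ((\<integral>S. transpose S ** S \<partial>D) *v h) - h \<bullet> h)"
    unfolding up_def by (rule expect_lemma[OF D_prob ES_int ES ESS_int])
  have L: "integrable D lo \<and> integral\<^sup>L D lo = f x + \<mu>f/2 * (h \<bullet> ((\<integral>S. transpose S ** S \<partial>D) *v h) - h \<bullet> h)"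
    unfolding lo_def by (rule expect_lemma[OF D_prob ES_int ES ESS_int])
  have sk: "sketch f s S x = f (x + (S *v h - h))" for S
    unfolding sketch_def h_def by (simp add: algebra_simps)
  have nd: "(norm (S *v h - h))\<^sup>2 = h \<bullet> ((transpose S ** S) *v h) - 2 * (h \<bullet> (S *v h)) + h \<bullet> h" for S
  proof -
    have "(norm (S *v h - h))\<^sup>2 = (S *v h - h) \<bullet> (S *v h - h)" by (rule power2_norm_eq_inner)
    also have "\<dots> = (S *v h) \<bullet> (S *v h) - 2 * (h \<bullet> (S *v h)) + h \<bullet> h"
      by (simp add: inner_diff_left inner_diff_right inner_commute)
    finally show ?thesis by (simp add: quad_id)
  qed
  have le_up: "sketch f s S x \<le> up S" for S
    using g[of "S *v h - h"] unfolding sk nd up_def by (simp add: inner_diff_right)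
  have lo_le: "lo S \<le> sketch f s S x" for S
    using g2[of "S *v h - h"] unfolding sk nd lo_def by (simp add: inner_diff_right)
  have cont2: "continuous_on UNIV (\<lambda>S::real^'n^'n. s + S *v h)"
    by (intro continuous_intros linear_continuous_on bl_mv)
  have "(\<lambda>S. sketch f s S x) \<in> borel_measurable borel"
    apply (rule borel_measurable_continuous_onI)
    unfolding sketch_def h_def[symmetric]
    using continuous_on_compose2[OF contf cont2] by simp
  hence meas: "(\<lambda>S. sketch f s S x) \<in> borel_measurable D"
    using measurable_cong_sets[OF D_sets refl] by blast
  have isk: "integrable D (\<lambda>S. sketch f s S x)"
  proof (rule Bochner_Integration.integrable_bound[OF _ meas])
    show "integrable D (\<lambda>S. \<bar>lo S\<bar> + \<bar>up S\<bar>)"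
      using U L by (intro Bochner_Integration.integrable_add integrable_abs) auto
    show "AE S in D. norm (sketch f s S x) \<le> norm (\<bar>lo S\<bar> + \<bar>up S\<bar>)"
      by (rule AE_I2) (smt (verit) le_up lo_le abs_ge_self abs_ge_minus_self real_norm_def)
  qed
  have "f_tilde D f s x \<le> integral\<^sup>L D up"
    unfolding f_tilde_def using isk U le_up by (intro integral_mono) auto
  moreover have "integral\<^sup>L D lo \<le> f_tilde D f s x"
    unfolding f_tilde_def using isk L lo_le by (intro integral_mono) auto
  ultimately show ?thesis using U L unfolding h_def by simp
qed

theorem theorem1:
  fixes f :: "real^'n \<Rightarrow> real" and s xstar xD :: "real^'n"
    and D :: "(real^'n^'n) measure" and Lf \<mu>f :: real
  assumes D_prob: "prob_space D"
    and D_sets: "sets D = sets borel"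
    and ES_int: "integrable D (\<lambda>S. S)"
    and ES: "(\<integral>S. S \<partial>D) = mat 1"
    and ESS_int: "integrable D (\<lambda>S. transpose S ** S)"
    and Lf_pos: "0 < Lf" and muf_pos: "0 < \<mu>f"
    and smooth: "L_smooth Lf f"
    and sconv: "strongly_convex \<mu>f f"
    and xstar_min: "\<forall>x. f xstar \<le> f x"
    and xD_min: "\<forall>x. f_tilde D f s xD \<le> f_tilde D f s x"
  shows "f xstar \<le> f xD \<and>
         f xD \<le> f xstar
           + (lambda_max (\<integral>S. transpose S ** S \<partial>D) - 1) * Lf / 2 * (norm (xstar - s))\<^sup>2
           - (lambda_min (\<integral>S. transpose S ** S \<partial>D) - 1) * \<mu>f / 2 * (norm (xD - s))\<^sup>2"
proof -
  define M where "M = (\<integral>S. transpose S ** S \<partial>D)"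
  have Mq: "u \<bullet> (M *v v) = (\<integral>S. (S *v u) \<bullet> (S *v v) \<partial>D)" for u v
    unfolding M_def using integral_bounded_linear[OF bl_uv ESS_int, of u v] by (simp add: quad_id)
  have symM: "u \<bullet> (M *v v) = v \<bullet> (M *v u)" for u v
    unfolding Mq by (simp add: inner_commute)
  have fin: "finite (eigenvalues M)" by (rule sym_eig_finite[OF symM])
  have upper: "h \<bullet> (M *v h) \<le> lambda_max M * (norm h)\<^sup>2" for h
  proof -
    obtain v c where vc: "v \<noteq> 0" "M *v v = c *\<^sub>R v" "\<forall>x. x \<bullet> (M *v x) \<le> c * (norm x)\<^sup>2"
      using sym_top_eig[of "(*v) M", OF matrix_vector_mul_bounded_linear symM] by blast
    have "c \<in> eigenvalues M" unfolding eigenvalues_def using vc by auto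
    hence "c \<le> lambda_max M" unfolding lambda_max_def using fin by simp
    hence "c * (norm h)\<^sup>2 \<le> lambda_max M * (norm h)\<^sup>2" by (simp add: mult_right_mono)
    thus ?thesis using vc(3) by (meson order_trans)
  qed
  have lower: "lambda_min M * (norm h)\<^sup>2 \<le> h \<bullet> (M *v h)" for h
  proof -
    have bl: "bounded_linear (\<lambda>x. - (M *v x))"
      by (intro bounded_linear_minus matrix_vector_mul_bounded_linear)
    obtain v c where vc: "v \<noteq> 0" "- (M *v v) = c *\<^sub>R v" "\<forall>x. x \<bullet> - (M *v x) \<le> c * (norm x)\<^sup>2"
      using sym_top_eig[of "\<lambda>x. - (M *v x)", OF bl] symM by fastforce
    have "M *v v = (- c) *\<^sub>R v" using vc(2) by (metis minus_minus scaleR_minus_left)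
    hence "- c \<in> eigenvalues M" unfolding eigenvalues_def using vc by auto
    hence "lambda_min M \<le> - c" unfolding lambda_min_def using fin by simp
    hence "lambda_min M * (norm h)\<^sup>2 \<le> (- c) * (norm h)\<^sup>2" by (intro mult_right_mono) auto
    moreover have "(- c) * (norm h)\<^sup>2 \<le> h \<bullet> (M *v h)" using vc(3)[rule_format, of h] by simp
    ultimately show ?thesis by linarith
  qed
  have contf: "continuous_on UNIV f"
  proof -
    have "isCont f x" for x
    proof -
      obtain g where "GDERIV f x :> g" using smooth unfolding L_smooth_def by blast
      thus ?thesis unfolding gderiv_def by (rule has_derivative_continuous)
    qed
    thus ?thesis by (simp add: continuous_at_imp_continuous_on)
  qed
  note B = sketch_bounds[OF D_prob D_sets ES_int ES ESS_int smooth sconv contf, folded M_def]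
  define hs where "hs = xstar - s"
  define hd where "hd = xD - s"
  have n1: "hs \<bullet> hs = (norm hs)\<^sup>2" "hd \<bullet> hd = (norm hd)\<^sup>2" by (simp_all add: power2_norm_eq_inner)
  have "f_tilde D f s xstar \<le> f xstar + Lf/2 * (hs \<bullet> (M *v hs) - (norm hs)\<^sup>2)"
    using B[where x=xstar and s=s] n1 unfolding hs_def by simp
  also have "\<dots> \<le> f xstar + Lf/2 * ((lambda_max M - 1) * (norm hs)\<^sup>2)"
    using upper[of hs] Lf_pos by (intro add_left_mono mult_left_mono) (auto simp: algebra_simps)
  finally have A1: "f_tilde D f s xstar \<le> f xstar + Lf/2 * ((lambda_max M - 1) * (norm hs)\<^sup>2)" .
  have "f xD + \<mu>f/2 * ((lambda_min M - 1) * (norm hd)\<^sup>2) \<le> f xD + \<mu>f/2 * (hd \<bullet> (M *v hd) - (norm hd)\<^sup>2)"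
    using lower[of hd] muf_pos by (intro add_left_mono mult_left_mono) (auto simp: algebra_simps)
  also have "\<dots> \<le> f_tilde D f s xD"
    using B[where x=xD and s=s] n1 unfolding hd_def by simp
  finally have A2: "f xD + \<mu>f/2 * ((lambda_min M - 1) * (norm hd)\<^sup>2) \<le> f_tilde D f s xD" .
  have "f_tilde D f s xD \<le> f_tilde D f s xstar" using xD_min by simp
  with A1 A2 have "f xD \<le> f xstar + Lf/2 * ((lambda_max M - 1) * (norm hs)\<^sup>2) - \<mu>f/2 * ((lambda_min M - 1) * (norm hd)\<^sup>2)"
    by linarith
  moreover have "f xstar \<le> f xD" using xstar_min by simp
  moreover have "(lambda_max M - 1) * Lf / 2 * (norm hs)\<^sup>2 = Lf/2 * ((lambda_max M - 1) * (norm hs)\<^sup>2)"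
    by (simp add: ac_simps)
  moreover have "(lambda_min M - 1) * \<mu>f / 2 * (norm hd)\<^sup>2 = \<mu>f/2 * ((lambda_min M - 1) * (norm hd)\<^sup>2)"
    by (simp add: ac_simps)
  ultimately show ?thesis unfolding M_def[symmetric] hs_def[symmetric] hd_def[symmetric]
    by linarith
qed

end
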